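(* Let $p,q\in\mathbb R^3$ with $|p|\ge\frac32q^0$. Then for any multi-index $\beta\in\mathbb N^3\setminus\{0\}$ (derivatives $\partial_\beta$ in $p$), $$|\partial_\beta g|\lesssim\langle q\rangle^{|\beta|},\qquad \Big|\partial_\beta\Big(\frac1g\Big)\Big|\lesssim\frac{\langle q\rangle^{|\beta|}}{g^2},$$ and $$|\partial_\beta\sqrt{\mathfrak s}|\lesssim\langle q\rangle^{|\beta|},\qquad \Big|\partial_\beta\Big(\frac1{\sqrt{\mathfrak s}}\Big)\Big|\lesssim\frac{\langle q\rangle^{|\beta|}}{g^2}.$$
   Context: $\mathfrak c\ge1$ is the speed of light; $p^0=\sqrt{\mathfrak c^2+|p|^2}$, $q^0=\sqrt{\mathfrak c^2+|q|^2}$, $\langle q\rangle=\sqrt{1+|q|^2}$; $\mathfrak s=2(p^0q^0-p\cdot q+\mathfrak c^2)$, $g=\sqrt{2(p^0q^0-p\cdot q-\mathfrak c^2)}$. Implicit constants are independent of $\mathfrak c$, $p$, $q$. *)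

theory Defs
  imports "HOL-Analysis.Analysis"
begin

text \<open>Relativistic quantities; c is the speed of light, momenta in R^3.\<close>

definition en :: "real \<Rightarrow> real^3 \<Rightarrow> real" where
  "en c p = sqrt (c\<^sup>2 + (norm p)\<^sup>2)"

definition jbr :: "real^3 \<Rightarrow> real" where
  "jbr q = sqrt (1 + (norm q)\<^sup>2)"

definition mand_s :: "real \<Rightarrow> real^3 \<Rightarrow> real^3 \<Rightarrow> real" where
  "mand_s c p q = 2 * (en c p * en c q - p \<bullet> q + c\<^sup>2)"

definition mand_g :: "real \<Rightarrow> real^3 \<Rightarrow> real^3 \<Rightarrow> real" where
  "mand_g c p q = sqrt (2 * (en c p * en c q - p \<bullet> q - c\<^sup>2))"

definition dpart :: "3 \<Rightarrow> (real^3 \<Rightarrow> real) \<Rightarrow> (real^3 \<Rightarrow> real)" where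
  "dpart i f = (\<lambda>x. deriv (\<lambda>t. f (x + t *\<^sub>R axis i 1)) 0)"

definition pD :: "nat^3 \<Rightarrow> (real^3 \<Rightarrow> real) \<Rightarrow> (real^3 \<Rightarrow> real)" where
  "pD \<beta> f = (dpart 1 ^^ (\<beta>$1)) ((dpart 2 ^^ (\<beta>$2)) ((dpart 3 ^^ (\<beta>$3)) f))"

definition mi_abs :: "nat^3 \<Rightarrow> nat" where
  "mi_abs \<beta> = (\<Sum>i\<in>UNIV. \<beta>$i)"

end

theory Submission
  imports Defs
begin


lemma norm_shift_sq:
  fixes p :: "real^3"
  shows "(norm (p + t *\<^sub>R axis j 1))\<^sup>2 = (norm p)\<^sup>2 + 2 * t * p$j + t\<^sup>2"
proof -
  have a: "axis j (1::real) \<bullet> axis j 1 = (1::real)" by (simp add: inner_axis_axis)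
  have "(p + t *\<^sub>R axis j 1) \<bullet> (p + t *\<^sub>R axis j 1) = p \<bullet> p + 2 * t * p$j + t\<^sup>2"
    by (simp add: inner_add_left inner_add_right inner_axis inner_axis' a algebra_simps power2_eq_square)
  then show ?thesis by (simp add: power2_norm_eq_inner)
qed

lemma inner_shift:
  fixes p q :: "real^3"
  shows "(p + t *\<^sub>R axis j 1) \<bullet> q = p \<bullet> q + t * q$j"
  by (simp add: inner_add_left inner_axis')

lemma en_pos: "c \<ge> 1 \<Longrightarrow> en c p > 0"
  unfolding en_def by (simp add: add_pos_nonneg)

lemma DERIV_en:
  fixes p :: "real^3" assumes "c \<ge> 1"
  shows "((\<lambda>t. en c (p + t *\<^sub>R axis j 1)) has_real_derivative p$j / en c p) (at 0)"
proof -
  have e: "en c (p + t *\<^sub>R axis j 1) = sqrt (c\<^sup>2 + (norm p)\<^sup>2 + 2 * t * p$j + t\<^sup>2)" for t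
    unfolding en_def norm_shift_sq by (simp add: add.assoc)
  have pos: "0 < c\<^sup>2 + (norm p)\<^sup>2" using assms by (simp add: add_pos_nonneg)
  have "((\<lambda>t. sqrt (c\<^sup>2 + (norm p)\<^sup>2 + 2 * t * p$j + t\<^sup>2)) has_real_derivative
     inverse (sqrt (c\<^sup>2 + (norm p)\<^sup>2)) / 2 * (2 * p$j)) (at 0)"
    apply (rule DERIV_chain2[where f=sqrt])
     using DERIV_real_sqrt[OF pos] apply simp
    apply (auto intro!: derivative_eq_intros)
    done
  then show ?thesis unfolding e by (simp add: en_def field_simps)
qed

definition Gf :: "bool \<Rightarrow> real \<Rightarrow> real^3 \<Rightarrow> real^3 \<Rightarrow> real" where
  "Gf b c q p = en c p * en c q - p \<bullet> q + (if b then c\<^sup>2 else - c\<^sup>2)"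

lemma DERIV_Gf:
  fixes p :: "real^3" assumes "c \<ge> 1"
  shows "((\<lambda>t. Gf b c q (p + t *\<^sub>R axis j 1)) has_real_derivative
     en c q * (p$j / en c p) - q$j) (at 0)"
  unfolding Gf_def inner_shift
  by (auto intro!: derivative_eq_intros DERIV_en[OF assms])

definition ppow :: "(3 \<Rightarrow> nat) \<Rightarrow> real^3 \<Rightarrow> real" where
  "ppow n x = (\<Prod>i\<in>UNIV. (x$i)^(n i))"

lemma ppow_split: "ppow n x = x$j^(n j) * (\<Prod>i\<in>UNIV-{j}. (x$i)^(n i))"
  unfolding ppow_def by (simp add: prod.remove)

lemma ppow_upd: "ppow (n(j:=v)) x = x$j^v * (\<Prod>i\<in>UNIV-{j}. (x$i)^(n i))"
  unfolding ppow_split[of _ _ j] by (auto intro!: prod.cong)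

lemma ppow_shift: "ppow n (x + t *\<^sub>R axis j 1) = (x$j + t)^(n j) * (\<Prod>i\<in>UNIV-{j}. (x$i)^(n i))"
  unfolding ppow_split[of _ _ j] by (auto intro!: prod.cong simp: axis_def)

lemma DERIV_ppow:
  "((\<lambda>t. ppow n (x + t *\<^sub>R axis j 1)) has_real_derivative
     real (n j) * ppow (n(j := n j - 1)) x) (at 0)"
  unfolding ppow_shift ppow_upd
  by (auto intro!: derivative_eq_intros)

datatype mono = Mono (mcf: "real \<Rightarrow> real^3 \<Rightarrow> real") (mkap: real) (mnq: nat) (mex: real) (mmw: nat) (mpw: "3 \<Rightarrow> nat")

definition meval :: "bool \<Rightarrow> real \<Rightarrow> real^3 \<Rightarrow> mono \<Rightarrow> real^3 \<Rightarrow> real" where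
  "meval b c q M x = mcf M c q * (Gf b c q x) powr (mex M) * (1 / en c x)^(mmw M) * ppow (mpw M) x"

fun dmono :: "3 \<Rightarrow> mono \<Rightarrow> mono list" where
  "dmono j (Mono f k nq a m n) =
    [Mono (\<lambda>c q. a * f c q * en c q) (\<bar>a\<bar> * k) (Suc nq) (a - 1) (Suc m) (n(j := Suc (n j))),
     Mono (\<lambda>c q. - a * f c q * q$j) (\<bar>a\<bar> * k) (Suc nq) (a - 1) m n,
     Mono (\<lambda>c q. - real m * f c q) (real m * k) nq a (m + 2) (n(j := Suc (n j))),
     Mono (\<lambda>c q. real (n j) * f c q) (real (n j) * k) nq a m (n(j := n j - 1))]"

definition leval :: "bool \<Rightarrow> real \<Rightarrow> real^3 \<Rightarrow> mono list \<Rightarrow> real^3 \<Rightarrow> real" where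
  "leval b c q L x = (\<Sum>M\<leftarrow>L. meval b c q M x)"

lemma DERIV_meval:
  fixes p :: "real^3" assumes c: "c \<ge> 1" and G: "Gf b c q p > 0"
  shows "((\<lambda>t. meval b c q M (p + t *\<^sub>R axis j 1)) has_real_derivative
     leval b c q (dmono j M) p) (at 0)"
proof (cases M)
  case (Mono f k nq a m n)
  define G where "G = Gf b c q p"
  define W where "W = 1 / en c p"
  define R where "R = (\<Prod>i\<in>UNIV-{j}. (p$i)^(n i))"
  have ep: "en c p > 0" using en_pos[OF c] .
  have d1: "((\<lambda>t. Gf b c q (p + t *\<^sub>R axis j 1) powr a) has_real_derivative
      a * G powr (a - 1) * (en c q * (p$j / en c p) - q$j)) (at 0)"
    using DERIV_fun_powr[OF DERIV_Gf[OF c] ] G unfolding G_def by (simp add: add_ac)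
  have d2: "((\<lambda>t. (1 / en c (p + t *\<^sub>R axis j 1))^m) has_real_derivative
      - real m * W^(m+2) * p$j) (at 0)"
  proof -
    have "((\<lambda>t. (1 / en c (p + t *\<^sub>R axis j 1))^m) has_real_derivative
      real m * W^(m-1) * (- (p$j / en c p) / (en c p)\<^sup>2)) (at 0)"
      unfolding W_def using ep
      by (auto intro!: derivative_eq_intros DERIV_en[OF c] simp: power2_eq_square)
    moreover have "real m * W^(m-1) * (- (p$j / en c p) / (en c p)\<^sup>2) = - real m * W^(m+2) * p$j"
    proof (cases m)
      case 0 then show ?thesis by simp
    next
      case (Suc m') then show ?thesis unfolding W_def using ep
        by (simp add: field_simps power2_eq_square)
    qed
    ultimately show ?thesis by simp
  qed
  note d3 = DERIV_ppow[of n p j]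
  have "((\<lambda>t. f c q * (Gf b c q (p + t *\<^sub>R axis j 1) powr a * (1 / en c (p + t *\<^sub>R axis j 1))^m * ppow n (p + t *\<^sub>R axis j 1))) has_real_derivative
     f c q * (a * G powr (a - 1) * (en c q * (p$j / en c p) - q$j) * W^m * ppow n p
       + G powr a * (- real m * W^(m+2) * p$j) * ppow n p
       + G powr a * W^m * (real (n j) * ppow (n(j := n j - 1)) p))) (at 0)"
    apply (rule DERIV_cong[OF DERIV_cmult[OF DERIV_mult[OF DERIV_mult[OF d1 d2] d3]]])
    unfolding G_def W_def by (simp add: algebra_simps)
  then have "((\<lambda>t. meval b c q M (p + t *\<^sub>R axis j 1)) has_real_derivative
     f c q * (a * G powr (a - 1) * (en c q * (p$j / en c p) - q$j) * W^m * ppow n p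
       + G powr a * (- real m * W^(m+2) * p$j) * ppow n p
       + G powr a * W^m * (real (n j) * ppow (n(j := n j - 1)) p))) (at 0)"
    unfolding Mono meval_def mono.sel by (simp add: mult.assoc)
  moreover have "f c q * (a * G powr (a - 1) * (en c q * (p$j / en c p) - q$j) * W^m * ppow n p
       + G powr a * (- real m * W^(m+2) * p$j) * ppow n p
       + G powr a * W^m * (real (n j) * ppow (n(j := n j - 1)) p)) = leval b c q (dmono j M) p"
  proof -
    have P1: "ppow (n(j := Suc (n j))) p = p$j * ppow n p"
      unfolding ppow_upd ppow_split[of n p j] by simp
    have Wd: "\<And>x. x / en c p = W * x" by (simp add: W_def)
    show ?thesis unfolding Mono leval_def meval_def
      by (simp add: P1 G_def[symmetric] W_def[symmetric] Wd algebra_simps)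
  qed
  ultimately show ?thesis by simp
qed

definition dlist :: "3 \<Rightarrow> mono list \<Rightarrow> mono list" where
  "dlist j L = concat (map (dmono j) L)"

lemma DERIV_leval:
  fixes p :: "real^3" assumes c: "c \<ge> 1" and G: "Gf b c q p > 0"
  shows "((\<lambda>t. leval b c q L (p + t *\<^sub>R axis j 1)) has_real_derivative
     leval b c q (dlist j L) p) (at 0)"
proof (induction L)
  case Nil then show ?case by (simp add: leval_def dlist_def)
next
  case (Cons M L)
  have "((\<lambda>t. meval b c q M (p + t *\<^sub>R axis j 1) + leval b c q L (p + t *\<^sub>R axis j 1)) has_real_derivative
     leval b c q (dmono j M) p + leval b c q (dlist j L) p) (at 0)"
    by (rule DERIV_add[OF DERIV_meval[OF c G] Cons.IH])
  then show ?case by (simp add: leval_def dlist_def)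
qed

definition UU :: "real \<Rightarrow> real^3 \<Rightarrow> (real^3) set" where
  "UU c q = {x. 0 < Gf False c q x}"

lemma open_UU: "open (UU c q)"
proof -
  have "continuous_on UNIV (\<lambda>x::real^3. Gf False c q x)"
    unfolding Gf_def en_def by (intro continuous_intros)
  then show ?thesis unfolding UU_def by (rule open_Collect_less[OF continuous_on_const])
qed

lemma Gf_mono: "Gf False c q x \<le> Gf b c q x"
  unfolding Gf_def by auto

lemma dpart_leval:
  assumes c: "c \<ge> 1" and x: "x \<in> UU c q" and f: "\<forall>y\<in>UU c q. f y = leval b c q L y"
  shows "dpart j f x = leval b c q (dlist j L) x"
proof -
  obtain d where d: "d > 0" "ball x d \<subseteq> UU c q" using open_UU x by (meson openE)
  have ev: "eventually (\<lambda>t. f (x + t *\<^sub>R axis j 1) = leval b c q L (x + t *\<^sub>R axis j 1)) (nhds 0)"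
    unfolding eventually_nhds_metric
  proof (intro exI[of _ d] conjI allI impI)
    fix t :: real assume "dist t 0 < d"
    then have "x + t *\<^sub>R axis j 1 \<in> ball x d" by (simp add: dist_norm)
    then show "f (x + t *\<^sub>R axis j 1) = leval b c q L (x + t *\<^sub>R axis j 1)" using d f by auto
  qed (use d in auto)
  have G: "Gf b c q x > 0" using x Gf_mono[of c q x b] unfolding UU_def by auto
  show ?thesis unfolding dpart_def
    using deriv_cong_ev[OF ev refl] DERIV_imp_deriv[OF DERIV_leval[OF c G]] by simp
qed

lemma iter_leval:
  assumes c: "c \<ge> 1" and f: "\<forall>y\<in>UU c q. f y = leval b c q L y"
  shows "\<forall>y\<in>UU c q. (dpart j ^^ n) f y = leval b c q ((dlist j ^^ n) L) y"
proof (induction n)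
  case 0 then show ?case using f by simp
next
  case (Suc n)
  show ?case using dpart_leval[OF c _ Suc] by simp
qed

lemma en_ge_norm: "norm x \<le> en c x"
  unfolding en_def by (rule real_le_rsqrt) simp

lemma en_nonneg: "0 \<le> en c x"
  unfolding en_def by simp

lemma comp_le_en: "\<bar>x$i\<bar> \<le> en c x"
  using component_le_norm_cart en_ge_norm order_trans by blast

definition Ee :: "mono \<Rightarrow> real" where
  "Ee M = real (mnq M) + real (sum (mpw M) UNIV) - real (mmw M)"

definition minv :: "real \<Rightarrow> nat \<Rightarrow> mono \<Rightarrow> bool" where
  "minv a0 k M \<longleftrightarrow> mkap M \<ge> 0 \<and> (\<forall>c q. \<bar>mcf M c q\<bar> \<le> mkap M * en c q ^ mnq M) \<and>
   (mkap M = 0 \<or> (sum (mpw M) UNIV \<le> mmw M \<and> 2 * mex M + Ee M = 2 * a0 - real k \<and> Ee M \<le> real k \<and>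
     (mex M \<le> a0 - 1 \<or> (k = 0 \<and> mmw M = 0 \<and> sum (mpw M) UNIV = 0 \<and> mex M = a0))))"

lemma sum_upd: "sum (n(j:=v)) (UNIV::3 set) + n j = sum n UNIV + v"
proof -
  have "sum (n(j:=v)) (UNIV::3 set) = (n(j:=v)) j + sum (n(j:=v)) (UNIV - {j})"
    by (rule sum.remove) auto
  also have "sum (n(j:=v)) (UNIV - {j}) = sum n (UNIV - {j})"
    by (rule sum.cong) auto
  finally have 1: "sum (n(j:=v)) (UNIV::3 set) = v + sum n (UNIV - {j})" by simp
  have 2: "sum n (UNIV::3 set) = n j + sum n (UNIV - {j})"
    by (rule sum.remove) auto
  show ?thesis unfolding 1 2 by (simp add: algebra_simps)
qed




definition mst :: "real \<Rightarrow> nat \<Rightarrow> mono \<Rightarrow> bool" where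
  "mst a0 k M \<longleftrightarrow> sum (mpw M) UNIV \<le> mmw M \<and> 2 * mex M + Ee M = 2 * a0 - real k \<and> Ee M \<le> real k \<and>
     (mex M \<le> a0 - 1 \<or> (k = 0 \<and> mmw M = 0 \<and> sum (mpw M) UNIV = 0 \<and> mex M = a0))"

lemma minv_alt: "minv a0 k M \<longleftrightarrow> mkap M \<ge> 0 \<and> (\<forall>c q. \<bar>mcf M c q\<bar> \<le> mkap M * en c q ^ mnq M) \<and>
   (mkap M = 0 \<or> mst a0 k M)"
  unfolding minv_def mst_def by blast

lemma minv_step:
  assumes "minv a0 k M" "M' \<in> set (dmono j M)"
  shows "minv a0 (Suc k) M'"
proof (cases M)
  case (Mono f kp nq a m n)
  define s where "s = sum n UNIV"
  have kp: "kp \<ge> 0" and fb: "\<And>c q. \<bar>f c q\<bar> \<le> kp * en c q ^ nq"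
    and st: "kp = 0 \<or> mst a0 k M"
    using assms(1) unfolding minv_alt Mono by auto
  have EeM: "Ee M = real nq + real s - real m" unfolding Ee_def Mono s_def by simp
  have nj: "n j \<le> s" unfolding s_def by (simp add: member_le_sum)
  have su1: "sum (n(j := Suc (n j))) UNIV = Suc s" using sum_upd[of n j "Suc (n j)"] nj unfolding s_def
    by linarith
  have su2: "n j \<ge> 1 \<Longrightarrow> sum (n(j := n j - 1)) UNIV = s - 1" using sum_upd[of n j "n j - 1"] nj unfolding s_def
    by linarith
  have eq: "en c q \<ge> 0" "\<bar>q$j\<bar> \<le> en c q" for c q using en_nonneg comp_le_en by auto
  have ST: "s \<le> m" "2 * a + (real nq + real s - real m) = 2 * a0 - real k"
      "real nq + real s - real m \<le> real k" "a \<le> a0 - 1 \<or> (k = 0 \<and> m = 0 \<and> s = 0 \<and> a = a0)"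
    if "kp \<noteq> 0"
    using st that EeM unfolding mst_def Mono mono.sel s_def by auto
  from assms(2) consider
      (A) "M' = Mono (\<lambda>c q. a * f c q * en c q) (\<bar>a\<bar> * kp) (Suc nq) (a - 1) (Suc m) (n(j := Suc (n j)))"
    | (B) "M' = Mono (\<lambda>c q. - a * f c q * q$j) (\<bar>a\<bar> * kp) (Suc nq) (a - 1) m n"
    | (C) "M' = Mono (\<lambda>c q. - real m * f c q) (real m * kp) nq a (m + 2) (n(j := Suc (n j)))"
    | (D) "M' = Mono (\<lambda>c q. real (n j) * f c q) (real (n j) * kp) nq a m (n(j := n j - 1))"
    unfolding Mono by auto
  then show ?thesis
  proof cases
    case A
    have bd: "\<bar>a * f c q * en c q\<bar> \<le> \<bar>a\<bar> * kp * en c q ^ Suc nq" for c q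
    proof -
      have "\<bar>a * f c q * en c q\<bar> = \<bar>a\<bar> * \<bar>f c q\<bar> * en c q" using eq(1)[of c q] by (simp add: abs_mult)
      also have "\<dots> \<le> \<bar>a\<bar> * (kp * en c q ^ nq) * en c q"
        by (intro mult_right_mono mult_left_mono fb eq) auto
      finally show ?thesis by (simp add: algebra_simps)
    qed
    have E': "Ee M' = real nq + real s - real m + 1" unfolding A Ee_def mono.sel su1 by simp
    have "\<bar>a\<bar> * kp = 0 \<or> mst a0 (Suc k) M'"
    proof (cases "kp = 0")
      case False
      note h = ST[OF False]
      have "mst a0 (Suc k) M'" unfolding mst_def E' unfolding A mono.sel su1
        using h by auto
      then show ?thesis by simp
    qed simp
    then show ?thesis unfolding minv_alt using bd kp unfolding A mono.sel by simp
  next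
    case B
    have bd: "\<bar>- a * f c q * q$j\<bar> \<le> \<bar>a\<bar> * kp * en c q ^ Suc nq" for c q
    proof -
      have "\<bar>- a * f c q * q$j\<bar> = \<bar>a\<bar> * \<bar>f c q\<bar> * \<bar>q$j\<bar>" by (simp add: abs_mult)
      also have "\<dots> \<le> \<bar>a\<bar> * (kp * en c q ^ nq) * en c q"
        by (intro mult_mono mult_left_mono fb eq) (auto intro!: mult_nonneg_nonneg kp simp: en_nonneg intro: order_trans[OF abs_ge_zero fb])
      finally show ?thesis by (simp add: algebra_simps)
    qed
    have E': "Ee M' = real nq + real s - real m + 1" unfolding B Ee_def mono.sel s_def by simp
    have "\<bar>a\<bar> * kp = 0 \<or> mst a0 (Suc k) M'"
    proof (cases "kp = 0")
      case False
      note h = ST[OF False]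
      have "mst a0 (Suc k) M'" unfolding mst_def E' unfolding B mono.sel s_def[symmetric]
        using h by auto
      then show ?thesis by simp
    qed simp
    then show ?thesis unfolding minv_alt using bd kp unfolding B mono.sel by simp
  next
    case C
    have bd: "\<bar>- real m * f c q\<bar> \<le> real m * kp * en c q ^ nq" for c q
      using mult_left_mono[OF fb[of c q], of "real m"] by (simp add: abs_mult algebra_simps)
    have E': "Ee M' = real nq + real s - real m - 1" unfolding C Ee_def mono.sel su1 by simp
    have "real m * kp = 0 \<or> mst a0 (Suc k) M'"
    proof (cases "kp = 0 \<or> m = 0")
      case False
      then have h: "s \<le> m" "2 * a + (real nq + real s - real m) = 2 * a0 - real k"
      "real nq + real s - real m \<le> real k" "a \<le> a0 - 1" using ST by auto
      have "mst a0 (Suc k) M'" unfolding mst_def E' unfolding C mono.sel su1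
        using h by auto
      then show ?thesis by simp
    qed auto
    then show ?thesis unfolding minv_alt using bd kp unfolding C mono.sel by simp
  next
    case D
    have bd: "\<bar>real (n j) * f c q\<bar> \<le> real (n j) * kp * en c q ^ nq" for c q
      using mult_left_mono[OF fb[of c q], of "real (n j)"] by (simp add: abs_mult algebra_simps)
    have "real (n j) * kp = 0 \<or> mst a0 (Suc k) M'"
    proof (cases "kp = 0 \<or> n j = 0")
      case False
      then have s1: "s \<ge> 1" and s2: "sum (n(j := n j - 1)) UNIV = s - 1" using nj su2 by auto
      then have h: "s \<le> m" "2 * a + (real nq + real s - real m) = 2 * a0 - real k"
      "real nq + real s - real m \<le> real k" "a \<le> a0 - 1" using ST False by auto
      have E': "Ee M' = real nq + real s - real m - 1" unfolding D Ee_def mono.sel s2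
        using s1 by (simp add: of_nat_diff)
      have "mst a0 (Suc k) M'" unfolding mst_def E' unfolding D mono.sel s2
        using h s1 by auto
      then show ?thesis by simp
    qed auto
    then show ?thesis unfolding minv_alt using bd kp unfolding D mono.sel by simp
  qed
qed



lemma key_poly:
  fixes P Q c :: real
  assumes "P \<ge> 0" "Q \<ge> 0" "P\<^sup>2 \<ge> 9/4 * (c\<^sup>2 + Q\<^sup>2)"
  shows "(P * Q + 51/50 * c\<^sup>2)\<^sup>2 \<le> (c\<^sup>2 + P\<^sup>2) * (c\<^sup>2 + Q\<^sup>2)"
proof -
  have PQ: "P \<ge> 3/2 * Q"
  proof -
    have e: "(3/2 * Q)\<^sup>2 = 9/4 * Q\<^sup>2" by (simp add: power2_eq_square)
    have "c\<^sup>2 \<ge> 0" by simp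
    then have "(3/2 * Q)\<^sup>2 \<le> P\<^sup>2" using assms(3) unfolding e distrib_left by linarith
    then show ?thesis using assms(1) power2_le_imp_le by blast
  qed
  define d where "d = P - 3/2 * Q"
  have d: "d \<ge> 0" using PQ d_def by simp
  have h1: "d * Q \<ge> 0" using d assms(2) by simp
  have h2: "d * d \<ge> 0" by simp
  have h3: "Q * Q \<ge> 0" by simp
  have X: "P\<^sup>2 + Q\<^sup>2 - 204/100 * P * Q - 404/10000 * c\<^sup>2 \<ge> 0"
  proof -
    have c2: "c\<^sup>2 \<le> 4/9 * P\<^sup>2 - Q\<^sup>2" using assms(3) unfolding distrib_left by linarith
    have e1: "P\<^sup>2 = d*d + 3*(d*Q) + 9/4*(Q*Q)" by (simp add: d_def algebra_simps power2_eq_square)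
    have e2: "P * Q = d*Q + 3/2*(Q*Q)" by (simp add: d_def algebra_simps)
    have e3: "Q\<^sup>2 = Q*Q" by (simp add: power2_eq_square)
    have "P\<^sup>2 + Q\<^sup>2 - 204/100 * (P * Q) - 404/10000 * (4/9 * P\<^sup>2 - Q\<^sup>2) \<ge> 0"
      unfolding e1 e2 e3 ring_distribs right_diff_distrib left_diff_distrib using h1 h2 h3 by linarith
    then show ?thesis using c2 unfolding right_diff_distrib by linarith
  qed
  have "(c\<^sup>2 + P\<^sup>2) * (c\<^sup>2 + Q\<^sup>2) - (P * Q + 51/50 * c\<^sup>2)\<^sup>2
      = c\<^sup>2 * (P\<^sup>2 + Q\<^sup>2 - 204/100 * P * Q - 404/10000 * c\<^sup>2)"
    by (simp add: power2_eq_square algebra_simps)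
  also have "\<dots> \<ge> 0" using X by simp
  finally show ?thesis by simp
qed

lemma region_lb:
  assumes c: "c \<ge> 1" and R: "norm p \<ge> 3/2 * en c q"
  shows "Gf False c q p \<ge> c\<^sup>2 / 50"
proof -
  define P where "P = norm p"
  define Q where "Q = norm q"
  have ep: "(en c p)\<^sup>2 = c\<^sup>2 + P\<^sup>2" unfolding en_def P_def by simp
  have eq: "(en c q)\<^sup>2 = c\<^sup>2 + Q\<^sup>2" unfolding en_def Q_def by simp
  have "P\<^sup>2 \<ge> (3/2 * en c q)\<^sup>2"
    using R en_nonneg[of c q] unfolding P_def by (intro power_mono) auto
  moreover have "(3/2 * en c q)\<^sup>2 = 9/4 * (en c q)\<^sup>2" by (simp add: power2_eq_square)
  ultimately have P2: "P\<^sup>2 \<ge> 9/4 * (c\<^sup>2 + Q\<^sup>2)" using eq by simp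
  have "(P * Q + 51/50 * c\<^sup>2)\<^sup>2 \<le> (en c p * en c q)\<^sup>2"
    unfolding power_mult_distrib ep eq
    using key_poly[OF _ _ P2] unfolding P_def Q_def by simp
  then have A: "P * Q + 51/50 * c\<^sup>2 \<le> en c p * en c q"
    using power2_le_imp_le en_nonneg by (metis mult_nonneg_nonneg)
  have "p \<bullet> q \<le> P * Q" unfolding P_def Q_def by (rule norm_cauchy_schwarz)
  then show ?thesis unfolding Gf_def using A by simp
qed



lemma jbr_ge1: "jbr q \<ge> 1" unfolding jbr_def by simp

lemma en_le_jbr: assumes "c \<ge> 1" shows "en c q \<le> c * jbr q"
proof -
  have c2: "c\<^sup>2 \<ge> 1" using assms by (simp add: one_le_power)
  have e: "(c * jbr q)\<^sup>2 = c\<^sup>2 + c\<^sup>2 * (norm q)\<^sup>2"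
    unfolding jbr_def power_mult_distrib by (simp add: algebra_simps)
  have "(norm q)\<^sup>2 \<le> c\<^sup>2 * (norm q)\<^sup>2" using c2 mult_right_mono[OF c2, of "(norm q)\<^sup>2"] by simp
  then have "c\<^sup>2 + (norm q)\<^sup>2 \<le> (c * jbr q)\<^sup>2" unfolding e by simp
  then have "sqrt (c\<^sup>2 + (norm q)\<^sup>2) \<le> sqrt ((c * jbr q)\<^sup>2)" by (rule real_sqrt_le_mono)
  also have "\<dots> = c * jbr q" using assms jbr_ge1[of q] by simp
  finally show ?thesis unfolding en_def .
qed

lemma c_le_en: "c \<ge> 0 \<Longrightarrow> c \<le> en c q"
  unfolding en_def by (rule real_le_rsqrt) simp

lemma powr_le1: fixes c x :: real assumes "c \<ge> 1" "x \<le> 0" shows "c powr x \<le> 1"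
proof -
  have "c powr x \<le> c powr 0" using assms by (intro powr_mono) auto
  then show ?thesis using assms by simp
qed

lemma cq_bound:
  fixes c e J Y E :: real
  assumes c: "c \<ge> 1" and ce: "c \<le> e" and eJ: "e \<le> c * J" and J: "J \<ge> 1"
    and YE: "Y + E \<le> 0" and Ek: "E \<le> real k"
  shows "c powr Y * e powr E \<le> J ^ k"
proof (cases "E \<ge> 0")
  case True
  have "e powr E \<le> (c * J) powr E" using True eJ c ce by (intro powr_mono2) auto
  also have "\<dots> = c powr E * J powr E" using c J by (simp add: powr_mult)
  finally have "c powr Y * e powr E \<le> c powr Y * (c powr E * J powr E)" by (simp add: mult_left_mono)
  also have "\<dots> = c powr (Y + E) * J powr E" by (simp add: powr_add)
  also have "\<dots> \<le> 1 * J powr real k"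
    using c J YE Ek by (intro mult_mono powr_le1) (auto intro: powr_mono)
  also have "\<dots> = J ^ k" using J by (simp add: powr_realpow)
  finally show ?thesis .
next
  case False
  have "e powr E \<le> c powr E" using False ce c by (intro powr_mono2') auto
  then have "c powr Y * e powr E \<le> c powr Y * c powr E" by (simp add: mult_left_mono)
  also have "\<dots> = c powr (Y + E)" by (simp add: powr_add)
  also have "\<dots> \<le> 1" using c YE by (rule powr_le1)
  also have "\<dots> \<le> J ^ k" using J by simp
  finally show ?thesis .
qed



lemma ppow_bound: "\<bar>ppow n p\<bar> \<le> en c p ^ sum n UNIV"
proof -
  have "\<bar>ppow n p\<bar> = (\<Prod>i\<in>UNIV. \<bar>p$i\<bar> ^ n i)" unfolding ppow_def by (simp add: abs_prod power_abs)
  also have "\<dots> \<le> (\<Prod>i\<in>UNIV. en c p ^ n i)"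
    by (intro prod_mono conjI power_mono comp_le_en) auto
  also have "\<dots> = en c p ^ sum n UNIV" by (simp add: power_sum)
  finally show ?thesis .
qed

lemma mono_bound:
  fixes s :: nat
  assumes c: "c \<ge> 1" and R: "norm p \<ge> 3/2 * en c q" and s: "s \<le> 1"
    and kp: "mkap M \<ge> 0" and cfb: "\<forall>c q. \<bar>mcf M c q\<bar> \<le> mkap M * en c q ^ mnq M"
    and st: "mkap M = 0 \<or> (sum (mpw M) UNIV \<le> mmw M \<and> mex M + real s \<le> 0 \<and>
               2 * (mex M + real s) + Ee M \<le> 0 \<and> Ee M \<le> real k)"
  shows "\<bar>meval b c q M p\<bar> * (Gf False c q p)^s \<le> mkap M * 50 powr (-(mex M + real s)) * jbr q ^ k"
proof (cases "mkap M = 0")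
  case True
  then have "mcf M c q = 0" using cfb by (metis abs_le_zero_iff mult_zero_left)
  then show ?thesis unfolding meval_def using True by simp
next
  case False
  then have st: "sum (mpw M) UNIV \<le> mmw M" "mex M + real s \<le> 0"
    "2 * (mex M + real s) + Ee M \<le> 0" "Ee M \<le> real k" using st by auto
  define a where "a = mex M"
  define m where "m = mmw M"
  define N where "N = sum (mpw M) UNIV"
  define X where "X = a + real s"
  define e0 where "e0 = en c p"
  define e1 where "e1 = en c q"
  define G where "G = Gf b c q p"
  define F where "F = Gf False c q p"
  have c0: "c > 0" using c by simp
  have e1c: "c \<le> e1" unfolding e1_def using c by (intro c_le_en) simp
  have e1p: "e1 > 0" using e1c c0 by simp
  have e01: "e1 \<le> e0" using R en_ge_norm[of p c] e1p unfolding e0_def e1_def by simp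
  have e0p: "e0 > 0" using e01 e1p by simp
  have Flb: "c\<^sup>2 / 50 \<le> F" unfolding F_def by (rule region_lb[OF c R])
  have c2p: "c\<^sup>2 / 50 > 0" using c0 by simp
  have FG: "F \<le> G" unfolding F_def G_def by (rule Gf_mono)
  have Fp: "F > 0" using Flb c2p by linarith
  have Gp: "G > 0" using Fp FG by simp
  have X0: "X \<le> 0" unfolding X_def a_def using st(2) .
  have pp: "(1 / e0)^m * \<bar>ppow (mpw M) p\<bar> \<le> e1 powr (real N - real m)"
  proof -
    have "(1 / e0)^m * \<bar>ppow (mpw M) p\<bar> \<le> (1 / e0)^m * e0 ^ N"
      unfolding N_def e0_def using e0p unfolding e0_def by (intro mult_left_mono ppow_bound) simp
    also have "\<dots> = e0 powr (real N - real m)"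
      using e0p by (simp add: powr_diff powr_realpow power_one_over divide_simps)
    also have "\<dots> \<le> e1 powr (real N - real m)"
    proof -
      have "real N \<le> real m" using st(1) unfolding N_def m_def by (simp only: of_nat_le_iff)
      then show ?thesis using e01 e1p by (intro powr_mono2') auto
    qed
    finally show ?thesis .
  qed
  have gp: "G powr a * F^s \<le> 50 powr (-X) * c powr (2 * X)"
  proof -
    have "G powr a * F^s \<le> G powr X"
    proof (cases "s = 0")
      case True then show ?thesis unfolding X_def by simp
    next
      case False then have "s = 1" using s by simp
      then show ?thesis unfolding X_def using FG Gp
        by (simp add: powr_add mult_left_mono)
    qed
    also have "\<dots> \<le> (c\<^sup>2 / 50) powr X"
      using X0 c2p Flb FG by (intro powr_mono2') auto
    also have "\<dots> = 50 powr (-X) * c powr (2 * X)"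
    proof -
      have "(c\<^sup>2 / 50) powr X = (c\<^sup>2) powr X / 50 powr X" using c0 by (simp add: powr_divide)
      also have "(c\<^sup>2) powr X = c powr (2 * X)" using c0
        by (simp add: powr_powr[symmetric] powr_numeral)
      finally show ?thesis by (simp add: powr_minus divide_simps)
    qed
    finally show ?thesis .
  qed
  have cf: "\<bar>mcf M c q\<bar> \<le> mkap M * e1 powr real (mnq M)"
    using cfb e1p unfolding e1_def by (simp add: powr_realpow)
  have "\<bar>meval b c q M p\<bar> * F^s = \<bar>mcf M c q\<bar> * (G powr a * F^s) * ((1 / e0)^m * \<bar>ppow (mpw M) p\<bar>)"
    unfolding meval_def G_def[symmetric] a_def[symmetric] m_def[symmetric] e0_def[symmetric]
    using e0p by (simp add: abs_mult algebra_simps)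
  also have "\<dots> \<le> (mkap M * e1 powr real (mnq M)) * (50 powr (-X) * c powr (2 * X)) * e1 powr (real N - real m)"
  proof -
    have B0: "0 \<le> G powr a * F^s" using Fp by simp
    have C0: "0 \<le> (1 / e0)^m * \<bar>ppow (mpw M) p\<bar>" using e0p by simp
    have K0: "0 \<le> mkap M * e1 powr real (mnq M)" using kp by simp
    have "\<bar>mcf M c q\<bar> * (G powr a * F^s) \<le> (mkap M * e1 powr real (mnq M)) * (50 powr (-X) * c powr (2 * X))"
      by (rule mult_mono[OF cf gp K0 B0])
    then show ?thesis by (rule mult_mono[OF _ pp _ C0]) (use K0 in simp)
  qed
  also have "\<dots> = mkap M * 50 powr (-X) * (c powr (2 * X) * e1 powr (Ee M))"
    unfolding Ee_def N_def m_def using e1p by (simp add: powr_add[symmetric] algebra_simps)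
  also have "\<dots> \<le> mkap M * 50 powr (-X) * jbr q ^ k"
    apply (intro mult_left_mono cq_bound[OF c e1c])
    using en_le_jbr[OF c, of q] jbr_ge1[of q] st kp unfolding e1_def X_def a_def by auto
  finally show ?thesis unfolding F_def X_def a_def .
qed



lemma minv_iter:
  assumes "\<forall>M\<in>set L. minv a0 k M"
  shows "\<forall>M\<in>set ((dlist j ^^ n) L). minv a0 (k + n) M"
proof (induction n)
  case 0 then show ?case using assms by simp
next
  case (Suc n)
  show ?case
  proof
    fix M assume "M \<in> set ((dlist j ^^ Suc n) L)"
    then obtain M1 where M1: "M1 \<in> set ((dlist j ^^ n) L)" "M \<in> set (dmono j M1)"
      by (auto simp: dlist_def)
    then show "minv a0 (k + Suc n) M" using Suc minv_step[of a0 "k + n" M1 M j] by simp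
  qed
qed

definition M0 :: "real \<Rightarrow> real \<Rightarrow> mono" where
  "M0 a0 k0 = Mono (\<lambda>_ _. k0) k0 0 a0 0 (\<lambda>_. 0)"

lemma minv_M0: "k0 \<ge> 0 \<Longrightarrow> minv a0 0 (M0 a0 k0)"
  unfolding minv_def M0_def Ee_def by simp

lemma meval_M0: "meval b c q (M0 a0 k0) x = k0 * Gf b c q x powr a0"
  unfolding meval_def M0_def ppow_def by simp

lemma sum_bound:
  fixes s :: nat
  assumes c: "c \<ge> 1" and R: "norm p \<ge> 3/2 * en c q" and s: "s \<le> 1"
    and H: "\<forall>M\<in>set L. mkap M \<ge> 0 \<and> (\<forall>c q. \<bar>mcf M c q\<bar> \<le> mkap M * en c q ^ mnq M) \<and>
       (mkap M = 0 \<or> (sum (mpw M) UNIV \<le> mmw M \<and> mex M + real s \<le> 0 \<and>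
               2 * (mex M + real s) + Ee M \<le> 0 \<and> Ee M \<le> real k))"
  shows "\<bar>leval b c q L p\<bar> * (Gf False c q p)^s \<le> (\<Sum>M\<leftarrow>L. mkap M * 50 powr (-(mex M + real s))) * jbr q ^ k"
  using H
proof (induction L)
  case Nil then show ?case by (simp add: leval_def)
next
  case (Cons M L)
  have Fp: "Gf False c q p \<ge> 0" using region_lb[OF c R] by (smt (verit) zero_le_power2 divide_nonneg_pos)
  have 1: "\<bar>meval b c q M p\<bar> * (Gf False c q p)^s \<le> mkap M * 50 powr (-(mex M + real s)) * jbr q ^ k"
    using Cons.prems mono_bound[OF c R s] by simp
  have 2: "\<bar>leval b c q L p\<bar> * (Gf False c q p)^s \<le> (\<Sum>M\<leftarrow>L. mkap M * 50 powr (-(mex M + real s))) * jbr q ^ k"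
    using Cons by simp
  have "\<bar>leval b c q (M # L) p\<bar> * (Gf False c q p)^s \<le> \<bar>meval b c q M p\<bar> * (Gf False c q p)^s + \<bar>leval b c q L p\<bar> * (Gf False c q p)^s"
    unfolding leval_def using Fp by (simp add: distrib_right[symmetric] mult_right_mono abs_triangle_ineq)
  then show ?case using 1 2 by (simp add: distrib_right)
qed



definition Lb :: "nat^3 \<Rightarrow> mono list \<Rightarrow> mono list" where
  "Lb \<beta> L = (dlist 1 ^^ (\<beta>$1)) ((dlist 2 ^^ (\<beta>$2)) ((dlist 3 ^^ (\<beta>$3)) L))"

definition Ks :: "nat \<Rightarrow> mono list \<Rightarrow> real" where
  "Ks s L = (\<Sum>M\<leftarrow>L. mkap M * 50 powr (-(mex M + real s)))"

lemma pD_leval: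
  assumes c: "c \<ge> 1" and f: "\<forall>y\<in>UU c q. f y = leval b c q L y" and x: "x \<in> UU c q"
  shows "pD \<beta> f x = leval b c q (Lb \<beta> L) x"
proof -
  have 3: "\<forall>y\<in>UU c q. (dpart 3 ^^ (\<beta>$3)) f y = leval b c q ((dlist 3 ^^ (\<beta>$3)) L) y"
    by (rule iter_leval[OF c f])
  have 2: "\<forall>y\<in>UU c q. (dpart 2 ^^ (\<beta>$2)) ((dpart 3 ^^ (\<beta>$3)) f) y
      = leval b c q ((dlist 2 ^^ (\<beta>$2)) ((dlist 3 ^^ (\<beta>$3)) L)) y"
    by (rule iter_leval[OF c 3])
  have 1: "\<forall>y\<in>UU c q. (dpart 1 ^^ (\<beta>$1)) ((dpart 2 ^^ (\<beta>$2)) ((dpart 3 ^^ (\<beta>$3)) f)) y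
      = leval b c q (Lb \<beta> L) y"
    unfolding Lb_def by (rule iter_leval[OF c 2])
  show ?thesis unfolding pD_def using 1 x by simp
qed

lemma minv_Lb:
  assumes "\<forall>M\<in>set L. minv a0 0 M"
  shows "\<forall>M\<in>set (Lb \<beta> L). minv a0 (mi_abs \<beta>) M"
proof -
  have "\<forall>M\<in>set (Lb \<beta> L). minv a0 (0 + \<beta>$3 + \<beta>$2 + \<beta>$1) M"
    unfolding Lb_def by (intro minv_iter assms)
  moreover have "mi_abs \<beta> = 0 + \<beta>$3 + \<beta>$2 + \<beta>$1" unfolding mi_abs_def sum_3 by simp
  ultimately show ?thesis by simp
qed

lemma minv_H:
  assumes "minv a0 k M" "k \<ge> 1" "(a0 = 1/2 \<and> s = 0) \<or> (a0 = -(1/2) \<and> s = 1)"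
  shows "mkap M \<ge> 0 \<and> (\<forall>c q. \<bar>mcf M c q\<bar> \<le> mkap M * en c q ^ mnq M) \<and>
       (mkap M = 0 \<or> (sum (mpw M) UNIV \<le> mmw M \<and> mex M + real s \<le> 0 \<and>
               2 * (mex M + real s) + Ee M \<le> 0 \<and> Ee M \<le> real k))"
  using assms unfolding minv_def by auto

lemma Ks_nonneg: "\<forall>M\<in>set L. mkap M \<ge> 0 \<Longrightarrow> Ks s L \<ge> 0"
  unfolding Ks_def by (induction L) auto

lemma beta_ne: "(\<beta>::nat^3) \<noteq> 0 \<Longrightarrow> mi_abs \<beta> \<ge> 1"
proof (rule ccontr)
  assume b: "\<beta> \<noteq> 0" and "\<not> 1 \<le> mi_abs \<beta>"
  then have "\<beta>$1 = 0" "\<beta>$2 = 0" "\<beta>$3 = 0" unfolding mi_abs_def sum_3 by auto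
  then have "\<beta> = 0" by (metis (full_types) exhaust_3 vec_eq_iff zero_index)
  with b show False by simp
qed

lemma g_eq: "mand_g c y q = sqrt 2 * sqrt (Gf False c q y)"
proof -
  have "mand_g c y q = sqrt (2 * Gf False c q y)" unfolding mand_g_def Gf_def by simp
  then show ?thesis by (simp add: real_sqrt_mult)
qed

lemma s_eq: "sqrt (mand_s c y q) = sqrt 2 * sqrt (Gf True c q y)"
proof -
  have "mand_s c y q = 2 * Gf True c q y" unfolding mand_s_def Gf_def by simp
  then show ?thesis by (simp add: real_sqrt_mult)
qed

lemma fun_g: "\<forall>y\<in>UU c q. mand_g c y q = leval False c q [M0 (1/2) (sqrt 2)] y"
  unfolding UU_def leval_def
  by (auto simp: meval_M0 g_eq powr_half_sqrt)

lemma fun_gi: "\<forall>y\<in>UU c q. 1 / mand_g c y q = leval False c q [M0 (-(1/2)) (1 / sqrt 2)] y"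
  unfolding UU_def leval_def
  by (auto simp: meval_M0 g_eq powr_minus powr_half_sqrt divide_simps)

lemma fun_s: "\<forall>y\<in>UU c q. sqrt (mand_s c y q) = leval True c q [M0 (1/2) (sqrt 2)] y"
proof
  fix y assume "y \<in> UU c q"
  then have "Gf True c q y > 0" using Gf_mono[of c q y True] unfolding UU_def by auto
  then show "sqrt (mand_s c y q) = leval True c q [M0 (1/2) (sqrt 2)] y"
    unfolding leval_def by (simp add: meval_M0 s_eq powr_half_sqrt)
qed

lemma fun_si: "\<forall>y\<in>UU c q. 1 / sqrt (mand_s c y q) = leval True c q [M0 (-(1/2)) (1 / sqrt 2)] y"
proof
  fix y assume "y \<in> UU c q"
  then have "Gf True c q y > 0" using Gf_mono[of c q y True] unfolding UU_def by auto
  then show "1 / sqrt (mand_s c y q) = leval True c q [M0 (-(1/2)) (1 / sqrt 2)] y"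
    unfolding leval_def by (simp add: meval_M0 s_eq powr_minus powr_half_sqrt divide_simps)
qed

theorem lemmaA4:
  fixes \<beta> :: "nat^3"
  assumes "\<beta> \<noteq> 0"
  shows "\<exists>C. \<forall>c p q. c \<ge> 1 \<and> norm p \<ge> 3/2 * en c q \<longrightarrow>
      \<bar>pD \<beta> (\<lambda>p'. mand_g c p' q) p\<bar> \<le> C * jbr q ^ mi_abs \<beta>
    \<and> \<bar>pD \<beta> (\<lambda>p'. 1 / mand_g c p' q) p\<bar> \<le> C * jbr q ^ mi_abs \<beta> / (mand_g c p q)\<^sup>2
    \<and> \<bar>pD \<beta> (\<lambda>p'. sqrt (mand_s c p' q)) p\<bar> \<le> C * jbr q ^ mi_abs \<beta>
    \<and> \<bar>pD \<beta> (\<lambda>p'. 1 / sqrt (mand_s c p' q)) p\<bar> \<le> C * jbr q ^ mi_abs \<beta> / (mand_g c p q)\<^sup>2"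
proof -
  define k where "k = mi_abs \<beta>"
  have k1: "k \<ge> 1" unfolding k_def using beta_ne assms .
  define L1 where "L1 = Lb \<beta> [M0 (1/2) (sqrt 2)]"
  define L2 where "L2 = Lb \<beta> [M0 (-(1/2)) (1 / sqrt 2)]"
  have I1: "\<forall>M\<in>set L1. minv (1/2) k M" unfolding L1_def k_def
    by (rule minv_Lb) (simp add: minv_M0)
  have I2: "\<forall>M\<in>set L2. minv (-(1/2)) k M" unfolding L2_def k_def
    by (rule minv_Lb) (simp add: minv_M0)
  have H1: "\<forall>M\<in>set L1. mkap M \<ge> 0 \<and> (\<forall>c q. \<bar>mcf M c q\<bar> \<le> mkap M * en c q ^ mnq M) \<and>
       (mkap M = 0 \<or> (sum (mpw M) UNIV \<le> mmw M \<and> mex M + real 0 \<le> 0 \<and>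
               2 * (mex M + real 0) + Ee M \<le> 0 \<and> Ee M \<le> real k))"
    using I1 minv_H[OF _ k1, of "1/2" _ 0] by blast
  have H2: "\<forall>M\<in>set L2. mkap M \<ge> 0 \<and> (\<forall>c q. \<bar>mcf M c q\<bar> \<le> mkap M * en c q ^ mnq M) \<and>
       (mkap M = 0 \<or> (sum (mpw M) UNIV \<le> mmw M \<and> mex M + real 1 \<le> 0 \<and>
               2 * (mex M + real 1) + Ee M \<le> 0 \<and> Ee M \<le> real k))"
    using I2 minv_H[OF _ k1, of "-(1/2)" _ 1] by blast
  define C1 where "C1 = Ks 0 L1"
  define C2 where "C2 = Ks 1 L2"
  have C1p: "C1 \<ge> 0" unfolding C1_def using H1 by (intro Ks_nonneg) blast
  have C2p: "C2 \<ge> 0" unfolding C2_def using H2 by (intro Ks_nonneg) blast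
  show ?thesis
  proof (intro exI[of _ "C1 + 2 * C2"] allI impI)
    fix c :: real and p q :: "real^3" assume cpq: "c \<ge> 1 \<and> norm p \<ge> 3/2 * en c q"
    then have c: "c \<ge> 1" and R: "norm p \<ge> 3/2 * en c q" by auto
    define F where "F = Gf False c q p"
    have Flb: "c\<^sup>2 / 50 \<le> F" unfolding F_def by (rule region_lb[OF c R])
    have Fp: "F > 0" using Flb c by (smt (verit) divide_pos_pos one_le_power zero_less_power2)
    have pU: "p \<in> UU c q" unfolding UU_def using Fp F_def by simp
    have g2: "(mand_g c p q)\<^sup>2 = 2 * F" unfolding g_eq F_def
      using Fp F_def by (simp add: power_mult_distrib)
    have J: "jbr q ^ k \<ge> 0" using jbr_ge1[of q] by simp
    have e1: "pD \<beta> (\<lambda>p'. mand_g c p' q) p = leval False c q L1 p"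
      unfolding L1_def by (rule pD_leval[OF c fun_g pU])
    have e2: "pD \<beta> (\<lambda>p'. 1 / mand_g c p' q) p = leval False c q L2 p"
      unfolding L2_def by (rule pD_leval[OF c fun_gi pU])
    have e3: "pD \<beta> (\<lambda>p'. sqrt (mand_s c p' q)) p = leval True c q L1 p"
      unfolding L1_def by (rule pD_leval[OF c fun_s pU])
    have e4: "pD \<beta> (\<lambda>p'. 1 / sqrt (mand_s c p' q)) p = leval True c q L2 p"
      unfolding L2_def by (rule pD_leval[OF c fun_si pU])
    have B1: "\<bar>leval b c q L1 p\<bar> \<le> C1 * jbr q ^ k" for b
      using sum_bound[OF c R _ H1, of b] unfolding C1_def Ks_def by simp
    have B2: "\<bar>leval b c q L2 p\<bar> \<le> (C1 + 2 * C2) * jbr q ^ k / (mand_g c p q)\<^sup>2" for b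
    proof -
      have "\<bar>leval b c q L2 p\<bar> * F \<le> C2 * jbr q ^ k"
        using sum_bound[OF c R _ H2, of b] unfolding C2_def Ks_def F_def by simp
      then have "\<bar>leval b c q L2 p\<bar> \<le> C2 * jbr q ^ k / F" using Fp by (simp add: field_simps)
      also have "\<dots> = 2 * C2 * jbr q ^ k / (mand_g c p q)\<^sup>2" unfolding g2 using Fp by simp
      also have "\<dots> \<le> (C1 + 2 * C2) * jbr q ^ k / (mand_g c p q)\<^sup>2"
        using C1p J by (intro divide_right_mono mult_right_mono) auto
      finally show ?thesis .
    qed
    have B1': "\<bar>leval b c q L1 p\<bar> \<le> (C1 + 2 * C2) * jbr q ^ k" for b
      using B1[of b] mult_right_mono[of C1 "C1 + 2 * C2" "jbr q ^ k"] C2p J by simp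
    show "\<bar>pD \<beta> (\<lambda>p'. mand_g c p' q) p\<bar> \<le> (C1 + 2 * C2) * jbr q ^ mi_abs \<beta>
    \<and> \<bar>pD \<beta> (\<lambda>p'. 1 / mand_g c p' q) p\<bar> \<le> (C1 + 2 * C2) * jbr q ^ mi_abs \<beta> / (mand_g c p q)\<^sup>2
    \<and> \<bar>pD \<beta> (\<lambda>p'. sqrt (mand_s c p' q)) p\<bar> \<le> (C1 + 2 * C2) * jbr q ^ mi_abs \<beta>
    \<and> \<bar>pD \<beta> (\<lambda>p'. 1 / sqrt (mand_s c p' q)) p\<bar> \<le> (C1 + 2 * C2) * jbr q ^ mi_abs \<beta> / (mand_g c p q)\<^sup>2"
      unfolding e1 e2 e3 e4 k_def[symmetric] using B1' B2 by blast
  qed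
qed


end
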